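(* Let $(c_n)_{n\in\mathbb{N}}$ be positive numbers with $\lim_{n\to\infty}c_n/n=\infty$, and let $(A_n)_{n\in\mathbb{N}}\subset\mathbb{N}$ satisfy $\lim_{n\to\infty}c_n^{-1}\log A_n=a$ for some $a>0$. Then for every $T>0$ and every sequence $(k_n)_{n\in\mathbb{N}}\subset\mathbb{N}_0$, $$\lim_{n\to\infty}\sup_{0\le t\le T}\Big|\frac1{c_n}\log^+\Big(\sum_{i=1}^{A_n}X_{i,k_n}([nt])\Big)-a\Big|=0\quad\text{a.s.}$$
   Context: $(X_{i,k})_{i\in\mathbb{N},k\in\mathbb{N}_0}$ are i.i.d. Galton–Watson processes $X_{i,k}=(X_{i,k}(n))_{n\in\mathbb{N}_0}$ with $X_{i,k}(0)=1$ and offspring mean $\mu\in(0,\infty)$. $\log^+x=\max(\log x,0)$, $[\cdot]$ is the integer part. *)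

theory Defs
  imports "HOL-Probability.Probability"
begin

definition logplus :: "real \<Rightarrow> real" where
  "logplus x = (if x \<le> 1 then 0 else ln x)"

text \<open>Galton-Watson processes built from offspring variables: the process with
  index (i,k) starts with one individual, and generation n+1 is the sum of the
  offspring numbers xi i k n j of the individuals j of generation n.\<close>
fun gw :: "(nat \<Rightarrow> nat \<Rightarrow> nat \<Rightarrow> nat \<Rightarrow> 'a \<Rightarrow> nat) \<Rightarrow> nat \<Rightarrow> nat \<Rightarrow> nat \<Rightarrow> 'a \<Rightarrow> nat" where
  "gw \<xi> i k 0 \<omega> = 1"
| "gw \<xi> i k (Suc n) \<omega> = (\<Sum>j<gw \<xi> i k n \<omega>. \<xi> i k n j \<omega>)"

end

theory Submission
  imports Defs
begin


lemma gw_cong: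
  "(\<And>i' k' g j. g < m \<Longrightarrow> \<xi> i' k' g j \<omega> = \<xi>' i' k' g j \<omega>') \<Longrightarrow> gw \<xi> i k m \<omega> = gw \<xi>' i k m \<omega>'"
proof (induction m)
  case 0 then show ?case by simp
next
  case (Suc m)
  then have "gw \<xi> i k m \<omega> = gw \<xi>' i k m \<omega>'" by auto
  then show ?case using Suc.prems by (auto intro!: sum.cong)
qed

lemma gw_meas:
  "(\<And>i' k' g j. g < m \<Longrightarrow> \<xi> i' k' g j \<in> measurable N (count_space UNIV)) \<Longrightarrow> gw \<xi> i k m \<in> measurable N (count_space UNIV)"
proof (induction m)
  case 0 then show ?case by simp
next
  case (Suc m)
  then have IH: "gw \<xi> i k m \<in> measurable N (count_space UNIV)" by auto
  have "(\<lambda>\<omega>. (\<lambda>a \<omega>. \<Sum>j<a. \<xi> i k m j \<omega>) (gw \<xi> i k m \<omega>) \<omega>) \<in> measurable N (count_space UNIV)"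
    apply (rule measurable_compose_countable[OF _ IH])
    apply (rule measurable_sum_nat) using Suc.prems by auto
  then show ?case by simp
qed

locale gwl = prob_space M for M :: "'a measure" +
  fixes p :: "nat pmf" and \<mu> :: real and \<xi> :: "nat \<Rightarrow> nat \<Rightarrow> nat \<Rightarrow> nat \<Rightarrow> 'a \<Rightarrow> nat"
  assumes indep: "indep_vars (\<lambda>_. count_space UNIV)
                  (\<lambda>(i, k, n, j). \<xi> i k n j) (UNIV :: (nat \<times> nat \<times> nat \<times> nat) set)"
    and distr: "\<And>i k n j. distr M (count_space UNIV) (\<xi> i k n j) = measure_pmf p"
    and mean_int: "integrable (measure_pmf p) real"
    and mean: "measure_pmf.expectation p real = \<mu>"
begin

lemma xi_meas[measurable]: "\<xi> i k n j \<in> measurable M (count_space UNIV)"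
proof -
  have "random_variable (count_space UNIV) ((\<lambda>(i, k, n, j). \<xi> i k n j) (i,k,n,j))"
    using indep unfolding indep_vars_def by blast
  then show ?thesis by simp
qed

lemma X_meas[measurable]: "gw \<xi> i k m \<in> measurable M (count_space UNIV)"
  by (rule gw_meas) simp

lemma prob_xi: "prob (\<xi> i k n j -` S \<inter> space M) = measure_pmf.prob p S"
proof -
  have "measure (distr M (count_space UNIV) (\<xi> i k n j)) S = prob (\<xi> i k n j -` S \<inter> space M)"
    by (rule measure_distr) auto
  then show ?thesis using distr by simp
qed

lemma xi_int: "integrable M (\<lambda>\<omega>. real (\<xi> i k n j \<omega>))"
proof -
  have "integrable (distr M (count_space UNIV) (\<xi> i k n j)) real" using distr mean_int by simp
  then show ?thesis by (subst (asm) integrable_distr_eq) auto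
qed

lemma xi_exp: "expectation (\<lambda>\<omega>. real (\<xi> i k n j \<omega>)) = \<mu>"
proof -
  have "integral\<^sup>L (distr M (count_space UNIV) (\<xi> i k n j)) real = \<mu>" using distr mean by simp
  then show ?thesis by (subst (asm) integral_distr) auto
qed

lemma indep_xi_X: "indep_var (count_space UNIV) (\<xi> i k m j) (count_space UNIV) (gw \<xi> i k m)"
proof -
  define A where "A = {(i,k,m,j)}"
  define B where "B = UNIV - A"
  define X where "X = (\<lambda>(i, k, n, j). \<xi> i k n j)"
  have ind: "indep_var (PiM A (\<lambda>_. count_space UNIV)) (\<lambda>\<omega>. restrict (\<lambda>x. X x \<omega>) A)
     (PiM B (\<lambda>_. count_space UNIV)) (\<lambda>\<omega>. restrict (\<lambda>x. X x \<omega>) B)"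
    by (rule indep_var_restrict[OF indep[folded X_def]]) (auto simp: B_def)
  define Y1 where "Y1 = (\<lambda>f::nat\<times>nat\<times>nat\<times>nat \<Rightarrow> nat. f (i,k,m,j))"
  define Y2 where "Y2 = (\<lambda>f::nat\<times>nat\<times>nat\<times>nat \<Rightarrow> nat. gw (\<lambda>i k n j f. f (i,k,n,j)) i k m f)"
  have m1: "Y1 \<in> measurable (PiM A (\<lambda>_. count_space UNIV)) (count_space UNIV)"
    unfolding Y1_def by (rule measurable_component_singleton) (simp add: A_def)
  have m2: "Y2 \<in> measurable (PiM B (\<lambda>_. count_space UNIV)) (count_space UNIV)"
    unfolding Y2_def by (rule gw_meas, rule measurable_component_singleton) (auto simp: B_def A_def)
  have "indep_var (count_space UNIV) (Y1 \<circ> (\<lambda>\<omega>. restrict (\<lambda>x. X x \<omega>) A))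
      (count_space UNIV) (Y2 \<circ> (\<lambda>\<omega>. restrict (\<lambda>x. X x \<omega>) B))"
    by (rule indep_var_compose[OF ind m1 m2])
  moreover have "Y1 \<circ> (\<lambda>\<omega>. restrict (\<lambda>x. X x \<omega>) A) = \<xi> i k m j"
    by (auto simp: Y1_def A_def X_def)
  moreover have "Y2 \<circ> (\<lambda>\<omega>. restrict (\<lambda>x. X x \<omega>) B) = gw \<xi> i k m"
    by (rule ext, simp add: Y2_def, rule sym, rule gw_cong) (auto simp: B_def A_def X_def)
  ultimately show ?thesis by simp
qed


lemma mu_nonneg: "0 \<le> \<mu>"
  using xi_exp[of 0 0 0 0, symmetric] by simp

definition f2 :: "nat \<Rightarrow> nat \<Rightarrow> real" where "f2 j v = (if j < v then 1 else 0)"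

lemma sum_f2: "(\<Sum>j. ennreal (f2 j v)) = ennreal (real v)"
proof -
  have "(\<Sum>j. ennreal (f2 j v)) = (\<Sum>j\<in>{..<v}. ennreal (f2 j v))"
    by (rule suminf_finite) (auto simp: f2_def)
  also have "\<dots> = ennreal (real v)" by (simp add: f2_def ennreal_of_nat_eq_real_of_nat)
  finally show ?thesis .
qed

lemma gw_Suc_sum: "ennreal (real (gw \<xi> i k (Suc m) \<omega>)) =
   (\<Sum>j. ennreal (real (\<xi> i k m j \<omega>) * f2 j (gw \<xi> i k m \<omega>)))"
proof -
  have "(\<Sum>j. ennreal (real (\<xi> i k m j \<omega>) * f2 j (gw \<xi> i k m \<omega>)))
     = (\<Sum>j\<in>{..<gw \<xi> i k m \<omega>}. ennreal (real (\<xi> i k m j \<omega>) * f2 j (gw \<xi> i k m \<omega>)))"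
    by (rule suminf_finite) (auto simp: f2_def)
  also have "\<dots> = (\<Sum>j\<in>{..<gw \<xi> i k m \<omega>}. ennreal (real (\<xi> i k m j \<omega>)))"
    by (rule sum.cong) (auto simp: f2_def)
  also have "\<dots> = ennreal (real (gw \<xi> i k (Suc m) \<omega>))"
    by simp
  finally show ?thesis by simp
qed

lemma wald_term: "(\<integral>\<^sup>+\<omega>. ennreal (real (\<xi> i k m j \<omega>) * f2 j (gw \<xi> i k m \<omega>)) \<partial>M)
   = ennreal \<mu> * (\<integral>\<^sup>+\<omega>. ennreal (f2 j (gw \<xi> i k m \<omega>)) \<partial>M)"
proof -
  have ind: "indep_var borel ((\<lambda>v. real v) \<circ> \<xi> i k m j) borel (f2 j \<circ> gw \<xi> i k m)"
    by (rule indep_var_compose[OF indep_xi_X]) auto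
  have i1: "integrable M (\<lambda>\<omega>. real (\<xi> i k m j \<omega>))" by (rule xi_int)
  have i2: "integrable M (\<lambda>\<omega>. f2 j (gw \<xi> i k m \<omega>))"
    by (rule integrable_const_bound[where B=1]) (auto simp: f2_def)
  have eq: "(\<integral>\<omega>. real (\<xi> i k m j \<omega>) * f2 j (gw \<xi> i k m \<omega>) \<partial>M) = \<mu> * (\<integral>\<omega>. f2 j (gw \<xi> i k m \<omega>) \<partial>M)"
    using indep_var_lebesgue_integral[OF ind] i1 i2 xi_exp by (simp add: comp_def)
  have int: "integrable M (\<lambda>\<omega>. real (\<xi> i k m j \<omega>) * f2 j (gw \<xi> i k m \<omega>))"
    using indep_var_integrable[OF ind] i1 i2 by (simp add: comp_def)
  have "(\<integral>\<^sup>+\<omega>. ennreal (real (\<xi> i k m j \<omega>) * f2 j (gw \<xi> i k m \<omega>)) \<partial>M)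
      = ennreal (\<integral>\<omega>. real (\<xi> i k m j \<omega>) * f2 j (gw \<xi> i k m \<omega>) \<partial>M)"
    by (rule nn_integral_eq_integral[OF int]) (auto simp: f2_def)
  also have "\<dots> = ennreal \<mu> * ennreal (\<integral>\<omega>. f2 j (gw \<xi> i k m \<omega>) \<partial>M)"
  proof -
    have nn: "0 \<le> (\<integral>\<omega>. f2 j (gw \<xi> i k m \<omega>) \<partial>M)" by (rule Bochner_Integration.integral_nonneg) (simp add: f2_def)
    show ?thesis by (simp only: eq ennreal_mult[OF mu_nonneg nn])
  qed
  also have "ennreal (\<integral>\<omega>. f2 j (gw \<xi> i k m \<omega>) \<partial>M) = (\<integral>\<^sup>+\<omega>. ennreal (f2 j (gw \<xi> i k m \<omega>)) \<partial>M)"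
    by (rule nn_integral_eq_integral[OF i2, symmetric]) (auto simp: f2_def)
  finally show ?thesis .
qed

lemma wald: "(\<integral>\<^sup>+\<omega>. ennreal (real (gw \<xi> i k m \<omega>)) \<partial>M) = ennreal (\<mu> ^ m)"
proof (induction m)
  case 0 then show ?case by (simp add: emeasure_space_1)
next
  case (Suc m)
  have "(\<integral>\<^sup>+\<omega>. ennreal (real (gw \<xi> i k (Suc m) \<omega>)) \<partial>M)
     = (\<integral>\<^sup>+\<omega>. (\<Sum>j. ennreal (real (\<xi> i k m j \<omega>) * f2 j (gw \<xi> i k m \<omega>))) \<partial>M)"
    by (simp only: gw_Suc_sum)
  also have "\<dots> = (\<Sum>j. (\<integral>\<^sup>+\<omega>. ennreal (real (\<xi> i k m j \<omega>) * f2 j (gw \<xi> i k m \<omega>)) \<partial>M))"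
    by (rule nn_integral_suminf) measurable
  also have "\<dots> = (\<Sum>j. ennreal \<mu> * (\<integral>\<^sup>+\<omega>. ennreal (f2 j (gw \<xi> i k m \<omega>)) \<partial>M))"
    by (simp only: wald_term)
  also have "\<dots> = ennreal \<mu> * (\<Sum>j. (\<integral>\<^sup>+\<omega>. ennreal (f2 j (gw \<xi> i k m \<omega>)) \<partial>M))"
    by simp
  also have "(\<Sum>j. (\<integral>\<^sup>+\<omega>. ennreal (f2 j (gw \<xi> i k m \<omega>)) \<partial>M))
      = (\<integral>\<^sup>+\<omega>. (\<Sum>j. ennreal (f2 j (gw \<xi> i k m \<omega>))) \<partial>M)"
    by (rule nn_integral_suminf[symmetric]) measurable
  also have "\<dots> = (\<integral>\<^sup>+\<omega>. ennreal (real (gw \<xi> i k m \<omega>)) \<partial>M)"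
    by (simp only: sum_f2)
  finally show ?case using Suc by (simp add: ennreal_mult mu_nonneg)
qed

end


lemma (in prob_space) indicator_sum_lower:
  fixes E :: "'i \<Rightarrow> 'a set" and I :: "'i set" and q :: real
  assumes fin: "finite I" and ev: "\<And>i. i \<in> I \<Longrightarrow> E i \<in> events"
    and p1: "\<And>i. i \<in> I \<Longrightarrow> prob (E i) = q"
    and p2: "\<And>i i'. i \<in> I \<Longrightarrow> i' \<in> I \<Longrightarrow> i \<noteq> i' \<Longrightarrow> prob (E i \<inter> E i') = q^2"
    and pos: "real (card I) * q > 0"
  shows "prob {\<omega>\<in>space M. (\<Sum>i\<in>I. indicator (E i) \<omega> :: real) < real (card I) * q / 2} \<le> 4 / (real (card I) * q)"
proof -
  define Y where "Y = (\<lambda>\<omega>. (\<Sum>i\<in>I. indicator (E i) \<omega> :: real))"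
  define n where "n = real (card I)"
  have intY: "integrable M Y" unfolding Y_def
    using ev by (intro Bochner_Integration.integrable_sum integrable_real_indicator) (auto simp: less_top[symmetric])
  have EY: "expectation Y = n * q"
  proof -
    have "expectation Y = (\<Sum>i\<in>I. expectation (indicator (E i) :: 'a \<Rightarrow> real))"
      unfolding Y_def using ev by (intro Bochner_Integration.integral_sum integrable_real_indicator) (auto simp: less_top[symmetric])
    also have "\<dots> = (\<Sum>i\<in>I. q)" using ev p1 by (intro sum.cong) auto
    finally show ?thesis by (simp add: n_def)
  qed
  have Y2: "(Y \<omega>)^2 = (\<Sum>i\<in>I. \<Sum>i'\<in>I. indicator (E i \<inter> E i') \<omega>)" for \<omega>
    unfolding Y_def power2_eq_square sum_product by (simp add: indicator_inter_arith)
  have intY2: "integrable M (\<lambda>\<omega>. (Y \<omega>)^2)" unfolding Y2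
    using ev by (intro Bochner_Integration.integrable_sum integrable_real_indicator) (auto simp: less_top[symmetric])
  have EY2: "expectation (\<lambda>\<omega>. (Y \<omega>)^2) = n * q + (n * n - n) * q^2"
  proof -
    have "expectation (\<lambda>\<omega>. (Y \<omega>)^2) = (\<Sum>i\<in>I. \<Sum>i'\<in>I. expectation (indicator (E i \<inter> E i') :: 'a \<Rightarrow> real))"
    proof -
      have ii: "integrable M (indicator (E i \<inter> E i') :: 'a \<Rightarrow> real)" if "i \<in> I" "i' \<in> I" for i i'
        using ev that by (intro integrable_real_indicator) (auto simp: less_top[symmetric])
      have "expectation (\<lambda>\<omega>. (Y \<omega>)^2) = (\<Sum>i\<in>I. expectation (\<lambda>\<omega>. \<Sum>i'\<in>I. indicator (E i \<inter> E i') \<omega> :: real))"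
        unfolding Y2 using ii by (intro Bochner_Integration.integral_sum Bochner_Integration.integrable_sum) auto
      also have "\<dots> = (\<Sum>i\<in>I. \<Sum>i'\<in>I. expectation (indicator (E i \<inter> E i') :: 'a \<Rightarrow> real))"
        using ii by (intro sum.cong refl Bochner_Integration.integral_sum) auto
      finally show ?thesis .
    qed
    also have "\<dots> = (\<Sum>i\<in>I. \<Sum>i'\<in>I. (if i = i' then q else q^2))"
      using ev p1 p2 by (intro sum.cong refl) auto
    also have "\<dots> = (\<Sum>i\<in>I. q + (n - 1) * q^2)"
    proof (intro sum.cong refl)
      fix i assume i: "i \<in> I"
      have "(\<Sum>i'\<in>I. (if i = i' then q else q^2)) = q + (\<Sum>i'\<in>I - {i}. (if i = i' then q else q^2))"
        by (subst sum.remove[OF fin i]) simp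
      also have "(\<Sum>i'\<in>I - {i}. (if i = i' then q else q^2)) = (\<Sum>i'\<in>I - {i}. q^2)"
        by (intro sum.cong) auto
      also have "\<dots> = (n - 1) * q^2"
      proof -
        have "card I \<ge> 1" using fin i by (metis One_nat_def Suc_leI card_gt_0_iff empty_iff)
        then show ?thesis using fin i by (simp add: n_def card_Diff_singleton of_nat_diff)
      qed
      finally show "(\<Sum>i'\<in>I. (if i = i' then q else q^2)) = q + (n - 1) * q^2" .
    qed
    also have "\<dots> = n * q + (n * n - n) * q^2" by (simp add: n_def algebra_simps)
    finally show ?thesis .
  qed
  have var: "variance Y \<le> n * q"
  proof -
    have "variance Y = n * q + (n * n - n) * q^2 - (n*q)^2"
      using variance_eq[OF intY intY2] EY EY2 by simp
    also have "\<dots> = n * q - n * q^2" by (simp add: algebra_simps power2_eq_square)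
    also have "\<dots> \<le> n * q" using pos by (simp add: n_def)
    finally show ?thesis .
  qed
  have "{\<omega>\<in>space M. Y \<omega> < n * q / 2} \<subseteq> {\<omega>\<in>space M. \<bar>Y \<omega> - expectation Y\<bar> \<ge> n * q / 2}"
    using EY by (auto simp: abs_if)
  then have "prob {\<omega>\<in>space M. Y \<omega> < n * q / 2} \<le> prob {\<omega>\<in>space M. \<bar>Y \<omega> - expectation Y\<bar> \<ge> n * q / 2}"
    using ev unfolding Y_def by (intro finite_measure_mono) auto
  also have "\<dots> \<le> variance Y / (n * q / 2)^2"
    using ev pos unfolding n_def by (intro Chebyshev_inequality) (auto simp: Y_def intro!: intY2[unfolded Y_def])
  also have "\<dots> \<le> (n * q) / (n * q / 2)^2"
    using var pos by (intro divide_right_mono) (auto simp: n_def)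
  also have "\<dots> = 4 / (n * q)" using pos by (simp add: n_def power2_eq_square field_simps)
  finally show ?thesis by (simp add: Y_def n_def)
qed



context gwl begin

lemma prob_inter:
  assumes "finite J"
  shows "prob {\<omega> \<in> space M. \<forall>x\<in>J. 1 \<le> (case x of (i,k,n,j) \<Rightarrow> \<xi> i k n j \<omega>)}
     = (measure_pmf.prob p {1..}) ^ card J"
proof (cases "J = {}")
  case True then show ?thesis by (simp add: prob_space)
next
  case False
  define X where "X = (\<lambda>(i, k, n, j). \<xi> i k n j)"
  have "{\<omega> \<in> space M. \<forall>x\<in>J. 1 \<le> (case x of (i,k,n,j) \<Rightarrow> \<xi> i k n j \<omega>)}
      = (\<Inter>x\<in>J. X x -` {1..} \<inter> space M)"
    using False by (auto simp: X_def split: prod.splits)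
  also have "prob \<dots> = (\<Prod>x\<in>J. prob (X x -` {1..} \<inter> space M))"
    by (rule indep_varsD[OF indep[folded X_def]]) (use False assms in auto)
  also have "\<dots> = (\<Prod>x\<in>J. measure_pmf.prob p {1..})"
    by (intro prod.cong refl) (auto simp: X_def prob_xi split: prod.splits)
  finally show ?thesis by simp
qed

definition Ev :: "nat \<Rightarrow> nat \<Rightarrow> nat \<Rightarrow> 'a set" where
  "Ev i kk L = {\<omega>\<in>space M. \<forall>g<L. 1 \<le> \<xi> i kk g 0 \<omega>}"

lemma Ev_sets[measurable]: "Ev i kk L \<in> events"
  unfolding Ev_def by measurable

lemma Ev_surv: "\<omega> \<in> Ev i kk L \<Longrightarrow> m \<le> L \<Longrightarrow> 1 \<le> gw \<xi> i kk m \<omega>"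
proof (induction m)
  case 0 then show ?case by simp
next
  case (Suc m)
  then have h: "1 \<le> gw \<xi> i kk m \<omega>" "1 \<le> \<xi> i kk m 0 \<omega>" by (auto simp: Ev_def)
  have "\<xi> i kk m 0 \<omega> \<le> (\<Sum>j<gw \<xi> i kk m \<omega>. \<xi> i kk m j \<omega>)"
    using h(1) by (intro member_le_sum) auto
  then show ?case using h by simp
qed

lemma prob_Ev: "prob (Ev i kk L) = (measure_pmf.prob p {1..}) ^ L"
proof -
  have "Ev i kk L = {\<omega> \<in> space M. \<forall>x\<in>(\<lambda>g. (i,kk,g,0::nat)) ` {..<L}. 1 \<le> (case x of (i,k,n,j) \<Rightarrow> \<xi> i k n j \<omega>)}"
    by (auto simp: Ev_def)
  moreover have "card ((\<lambda>g. (i,kk,g,0::nat)) ` {..<L}) = L"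
    by (subst card_image) (auto simp: inj_on_def)
  moreover have "prob {\<omega> \<in> space M. \<forall>x\<in>(\<lambda>g. (i,kk,g,0::nat)) ` {..<L}. 1 \<le> (case x of (i,k,n,j) \<Rightarrow> \<xi> i k n j \<omega>)}
     = (measure_pmf.prob p {1..}) ^ card ((\<lambda>g. (i,kk,g,0::nat)) ` {..<L})"
    by (rule prob_inter) simp
  ultimately show ?thesis by simp
qed

lemma prob_Ev2: "i \<noteq> i' \<Longrightarrow> prob (Ev i kk L \<inter> Ev i' kk L) = ((measure_pmf.prob p {1..}) ^ L)^2"
proof -
  assume ne: "i \<noteq> i'"
  let ?J = "(\<lambda>g. (i,kk,g,0::nat)) ` {..<L} \<union> (\<lambda>g. (i',kk,g,0::nat)) ` {..<L}"
  have "Ev i kk L \<inter> Ev i' kk L = {\<omega> \<in> space M. \<forall>x\<in>?J. 1 \<le> (case x of (i,k,n,j) \<Rightarrow> \<xi> i k n j \<omega>)}"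
    by (auto simp: Ev_def ball_Un)
  moreover have "card ?J = L + L"
    using ne by (subst card_Un_disjoint) (auto simp: card_image inj_on_def)
  moreover have "prob {\<omega> \<in> space M. \<forall>x\<in>?J. 1 \<le> (case x of (i,k,n,j) \<Rightarrow> \<xi> i k n j \<omega>)}
     = (measure_pmf.prob p {1..}) ^ card ?J"
    by (rule prob_inter) simp
  ultimately show ?thesis by (simp add: power_add power2_eq_square)
qed

lemma lower_prob:
  assumes fin: "finite I" and pos: "real (card I) * (measure_pmf.prob p {1..}) ^ L > 0"
  shows "prob {\<omega>\<in>space M. (\<Sum>i\<in>I. indicator (Ev i kk L) \<omega> :: real) < real (card I) * (measure_pmf.prob p {1..}) ^ L / 2}
     \<le> 4 / (real (card I) * (measure_pmf.prob p {1..}) ^ L)"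
  by (rule indicator_sum_lower[OF fin Ev_sets prob_Ev prob_Ev2 pos])

lemma Ev_le_S:
  assumes "finite I" "m \<le> L"
  shows "(\<Sum>i\<in>I. indicator (Ev i kk L) \<omega> :: real) \<le> real (\<Sum>i\<in>I. gw \<xi> i kk m \<omega>)"
  unfolding of_nat_sum
  by (intro sum_mono) (use Ev_surv assms in \<open>auto simp: indicator_def\<close>)

end


context gwl begin

lemma X_int: "integrable M (\<lambda>\<omega>. real (gw \<xi> i k m \<omega>))"
  by (rule integrableI_nn_integral_finite[OF _ _ wald]) auto

lemma X_exp: "expectation (\<lambda>\<omega>. real (gw \<xi> i k m \<omega>)) = \<mu> ^ m"
proof -
  have "ennreal (expectation (\<lambda>\<omega>. real (gw \<xi> i k m \<omega>))) = ennreal (\<mu> ^ m)"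
    using nn_integral_eq_integral[OF X_int] wald by simp
  moreover have "0 \<le> expectation (\<lambda>\<omega>. real (gw \<xi> i k m \<omega>))" by simp
  ultimately show ?thesis using mu_nonneg by (simp add: ennreal_inj)
qed

lemma upper_prob_m:
  assumes "finite I" "0 < B"
  shows "prob {\<omega>\<in>space M. B < real (\<Sum>i\<in>I. gw \<xi> i kk m \<omega>)} \<le> real (card I) * \<mu> ^ m / B"
proof -
  have int: "integrable M (\<lambda>\<omega>. real (\<Sum>i\<in>I. gw \<xi> i kk m \<omega>))"
    unfolding of_nat_sum by (intro Bochner_Integration.integrable_sum X_int)
  have E: "expectation (\<lambda>\<omega>. real (\<Sum>i\<in>I. gw \<xi> i kk m \<omega>)) = real (card I) * \<mu> ^ m"
    unfolding of_nat_sum by (subst Bochner_Integration.integral_sum) (auto simp: X_int X_exp)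
  have "prob {\<omega>\<in>space M. B < real (\<Sum>i\<in>I. gw \<xi> i kk m \<omega>)} \<le> prob {\<omega>\<in>space M. real (\<Sum>i\<in>I. gw \<xi> i kk m \<omega>) \<ge> B}"
    by (intro finite_measure_mono) auto
  also have "\<dots> \<le> expectation (\<lambda>\<omega>. real (\<Sum>i\<in>I. gw \<xi> i kk m \<omega>)) / B"
    by (rule integral_Markov_inequality_measure[OF int, where A="space M"]) (use assms in \<open>auto intro!: sum_nonneg\<close>)
  finally show ?thesis using E by simp
qed

lemma pi_le1: "measure_pmf.prob p {1..} \<le> 1" by simp

lemma pi_pos: assumes "0 < \<mu>" shows "0 < measure_pmf.prob p {1..}"
proof (rule ccontr)
  assume "\<not> 0 < measure_pmf.prob p {1..}"
  then have z: "measure_pmf.prob p {1..} = 0" by (simp add: less_le)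
  have "AE x in measure_pmf p. real x = 0"
  proof (rule AE_I2[THEN AE_mp[OF AE_measure_pmf]], intro impI)
    fix x assume x: "x \<in> set_pmf p"
    show "real x = 0"
    proof (rule ccontr)
      assume "real x \<noteq> 0"
      then have "x \<in> {1..}" by simp
      then have "pmf p x \<le> measure_pmf.prob p {1..}"
        by (simp add: measure_pmf_single[symmetric] measure_pmf.finite_measure_mono)
      with z x show False by (simp add: set_pmf_eq')
    qed
  qed
  then have "measure_pmf.expectation p real = measure_pmf.expectation p (\<lambda>_. 0::real)"
    by (intro integral_cong_AE) auto
  then have "measure_pmf.expectation p real = 0" by simp
  with mean assms show False by simp
qed

end


lemma summable_exp_bound:
  fixes f :: "nat \<Rightarrow> real"
  assumes ev: "eventually (\<lambda>n. f n \<le> C * exp (- real n)) sequentially" and nn: "\<And>n. 0 \<le> f n"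
  shows "summable f"
proof (rule summable_comparison_test_ev)
  show "eventually (\<lambda>n. norm (f n) \<le> C * exp (- real n)) sequentially" using ev nn by simp
  have "summable (\<lambda>n. exp (-1) ^ n :: real)" by (rule summable_geometric) simp
  then have "summable (\<lambda>n. C * exp (-1) ^ n :: real)" by (rule summable_mult)
  moreover have "exp (- real n) = exp (-1) ^ n" for n
    using exp_of_nat_mult[of n "-1::real"] by simp
  ultimately show "summable (\<lambda>n. C * exp (- real n))" by simp
qed

lemma value_bound:
  fixes c a \<epsilon> s :: real
  assumes c: "0 < c" and e: "0 < \<epsilon>" "\<epsilon> < a" and lo: "exp ((a - \<epsilon>) * c) \<le> s" and up: "s \<le> exp ((a + \<epsilon>) * c)"
  shows "\<bar>logplus s / c - a\<bar> \<le> \<epsilon>"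
proof -
  have "1 < exp ((a - \<epsilon>) * c)" using c e by simp
  then have s1: "1 < s" using lo by linarith
  then have lp: "logplus s = ln s" by (simp add: logplus_def)
  have "(a - \<epsilon>) * c \<le> ln s" using lo s1
    using ln_le_cancel_iff[of "exp ((a - \<epsilon>) * c)" s] by simp
  moreover have "ln s \<le> (a + \<epsilon>) * c" using up s1
    using ln_le_cancel_iff[of s "exp ((a + \<epsilon>) * c)"] by simp
  ultimately have "a - \<epsilon> \<le> ln s / c" "ln s / c \<le> a + \<epsilon>"
    using c by (simp_all add: pos_le_divide_eq pos_divide_le_eq)
  then show ?thesis using lp by (simp add: abs_le_iff)
qed

locale gwm = gwl M p \<mu> \<xi> for M :: "'a measure" and p \<mu> \<xi> +
  fixes c :: "nat \<Rightarrow> real" and A :: "nat \<Rightarrow> nat" and a T :: real and k :: "nat \<Rightarrow> nat"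
  assumes mu_pos: "0 < \<mu>"
    and c_pos: "\<And>n. n \<ge> 1 \<Longrightarrow> c n > 0"
    and c_lim: "filterlim (\<lambda>n. c n / real n) at_top sequentially"
    and A_pos: "\<And>n. n \<ge> 1 \<Longrightarrow> A n \<ge> 1"
    and A_lim: "(\<lambda>n. ln (real (A n)) / c n) \<longlonglongrightarrow> a"
    and a_pos: "a > 0"
    and T_pos: "T > 0"
begin

definition "L n = nat \<lfloor>real n * T\<rfloor>"
definition "S n m \<omega> = (\<Sum>i\<in>{1..A n}. gw \<xi> i (k n) m \<omega>)"

lemma L_le: "real (L n) \<le> real n * T"
  unfolding L_def using T_pos by simp

lemma L_ge: "0 \<le> t \<Longrightarrow> t \<le> T \<Longrightarrow> nat \<lfloor>real n * t\<rfloor> \<le> L n"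
  unfolding L_def by (intro nat_mono floor_mono mult_left_mono) auto

lemma c_K: "eventually (\<lambda>n. K * real n \<le> c n) sequentially"
proof -
  have "eventually (\<lambda>n. K \<le> c n / real n) sequentially"
    using c_lim by (simp add: filterlim_at_top)
  moreover have "eventually (\<lambda>n. n \<ge> 1) sequentially" by (rule eventually_ge_at_top)
  ultimately show ?thesis
    by eventually_elim (simp add: pos_le_divide_eq)
qed

lemma A_up: "0 < \<epsilon> \<Longrightarrow> eventually (\<lambda>n. ln (real (A n)) \<le> (a + \<epsilon>) * c n) sequentially"
proof -
  assume e: "0 < \<epsilon>"
  have "eventually (\<lambda>n. ln (real (A n)) / c n < a + \<epsilon>) sequentially"
    using A_lim e by (intro order_tendstoD) auto
  moreover have "eventually (\<lambda>n. n \<ge> 1) sequentially" by (rule eventually_ge_at_top)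
  ultimately show ?thesis
    by eventually_elim (use c_pos in \<open>auto simp: pos_divide_less_eq\<close>)
qed

lemma A_low: "0 < \<epsilon> \<Longrightarrow> eventually (\<lambda>n. (a - \<epsilon>) * c n \<le> ln (real (A n))) sequentially"
proof -
  assume e: "0 < \<epsilon>"
  have "eventually (\<lambda>n. a - \<epsilon> < ln (real (A n)) / c n) sequentially"
    using A_lim e by (intro order_tendstoD) auto
  moreover have "eventually (\<lambda>n. n \<ge> 1) sequentially" by (rule eventually_ge_at_top)
  ultimately show ?thesis
    by eventually_elim (use c_pos in \<open>auto simp: pos_less_divide_eq\<close>)
qed

lemma S_meas[measurable]: "S n m \<in> measurable M (count_space UNIV)"
  unfolding S_def by measurable

end


context gwm begin

lemma S_real_meas[measurable]: "(\<lambda>\<omega>. real (S n m \<omega>)) \<in> borel_measurable M"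
  by (rule measurable_compose[OF S_meas]) simp

lemma upper_AE:
  assumes e: "0 < \<epsilon>"
  shows "AE \<omega> in M. eventually (\<lambda>n. \<forall>m\<le>L n. real (S n m \<omega>) \<le> exp ((a+\<epsilon>) * c n)) sequentially"
proof -
  define B where "B n = exp ((a+\<epsilon>) * c n)" for n
  define U where "U n = (\<Union>m\<in>{..L n}. {\<omega>\<in>space M. B n < real (S n m \<omega>)})" for n
  define \<rho> where "\<rho> = max 1 \<mu>"
  define lr where "lr = ln \<rho>"
  have \<rho>1: "1 \<le> \<rho>" and lr0: "0 \<le> lr" by (auto simp: \<rho>_def lr_def)
  have Us: "U n \<in> sets M" for n unfolding U_def by measurable
  have bnd: "measure M (U n) \<le> real (L n + 1) * real (A n) * \<rho> ^ L n / B n" for n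
  proof -
    have "measure M (U n) \<le> (\<Sum>m\<in>{..L n}. prob {\<omega>\<in>space M. B n < real (S n m \<omega>)})"
      unfolding U_def by (rule measure_UNION_le) auto
    also have "\<dots> \<le> (\<Sum>m\<in>{..L n}. real (A n) * \<rho> ^ L n / B n)"
    proof (rule sum_mono)
      fix m assume m: "m \<in> {..L n}"
      have "prob {\<omega>\<in>space M. B n < real (S n m \<omega>)} \<le> real (card {1..A n}) * \<mu> ^ m / B n"
        unfolding S_def by (rule upper_prob_m) (auto simp: B_def)
      also have "\<dots> \<le> real (A n) * \<rho> ^ L n / B n"
      proof -
        have "\<mu> ^ m \<le> \<rho> ^ m" using mu_nonneg by (intro power_mono) (auto simp: \<rho>_def)
        also have "\<dots> \<le> \<rho> ^ L n" using m \<rho>1 by (intro power_increasing) auto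
        finally have "real (A n) * \<mu> ^ m \<le> real (A n) * \<rho> ^ L n" by (intro mult_left_mono) auto
        then show ?thesis by (intro divide_right_mono) (auto simp: B_def)
      qed
      finally show "prob {\<omega>\<in>space M. B n < real (S n m \<omega>)} \<le> real (A n) * \<rho> ^ L n / B n" .
    qed
    also have "\<dots> = real (L n + 1) * real (A n) * \<rho> ^ L n / B n" by simp
    finally show ?thesis .
  qed
  define K where "K = 2 * (T + T * lr + 1) / \<epsilon>"
  have ev: "eventually (\<lambda>n. real (L n + 1) * real (A n) * \<rho> ^ L n / B n \<le> 1 * exp (- real n)) sequentially"
    using eventually_ge_at_top[of 1] A_up[of "\<epsilon>/2", OF half_gt_zero[OF e]] c_K[of K]
  proof eventually_elim
    case (elim n)
    have A1: "0 < real (A n)" using A_pos[of n] elim by simp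
    have rL: "\<rho> ^ L n = exp (real (L n) * lr)"
      using exp_of_nat_mult[of "L n" lr] \<rho>1 by (simp add: lr_def)
    have eq: "real (L n + 1) * real (A n) * \<rho> ^ L n / B n
       = exp (ln (real (L n + 1)) + ln (real (A n)) + real (L n) * lr - (a+\<epsilon>) * c n)"
      using A1 by (simp add: exp_add exp_diff rL B_def)
    have l1: "ln (real (L n + 1)) \<le> real (L n)"
      using ln_add_one_self_le_self[of "real (L n)"] by (simp add: add.commute)
    have l2: "real (L n) \<le> real n * T" by (rule L_le)
    have l3: "real (L n) * lr \<le> real n * T * lr" using l2 lr0 by (rule mult_right_mono)
    have l4: "\<epsilon> / 2 * (K * real n) \<le> \<epsilon> / 2 * c n" using elim e by (intro mult_left_mono) auto
    have l5: "\<epsilon> / 2 * (K * real n) = real n * T + real n * T * lr + real n"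
      using e by (simp add: K_def field_simps)
    have "ln (real (L n + 1)) + ln (real (A n)) + real (L n) * lr - (a+\<epsilon>) * c n \<le> - real n"
      using l1 l2 l3 l4 l5 elim by (simp add: algebra_simps)
    then show ?case unfolding eq by simp
  qed
  have sum: "summable (\<lambda>n. measure M (U n))"
  proof (rule summable_exp_bound)
    show "eventually (\<lambda>n. measure M (U n) \<le> 1 * exp (- real n)) sequentially"
      using ev by eventually_elim (use bnd order_trans in blast)
  qed simp
  have "AE \<omega> in M. eventually (\<lambda>n. \<omega> \<in> space M - U n) sequentially"
    by (rule borel_cantelli_AE1[OF Us _ sum]) (simp add: less_top[symmetric])
  then show ?thesis
  proof (rule AE_mp[OF _ AE_I2], intro impI)
    fix \<omega> assume h: "eventually (\<lambda>n. \<omega> \<in> space M - U n) sequentially" "\<omega> \<in> space M"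
    from h(1) show "eventually (\<lambda>n. \<forall>m\<le>L n. real (S n m \<omega>) \<le> exp ((a+\<epsilon>) * c n)) sequentially"
      by eventually_elim (auto simp: U_def B_def not_less)
  qed
qed


lemma aux4: "4 / exp (y::real) = 4 * exp (- y)"
  by (simp add: exp_minus divide_inverse)

lemma lower_AE:
  assumes e: "0 < \<epsilon>" "\<epsilon> < a"
  shows "AE \<omega> in M. eventually (\<lambda>n. \<forall>m\<le>L n. exp ((a-\<epsilon>) * c n) \<le> real (S n m \<omega>)) sequentially"
proof -
  define \<pi> where "\<pi> = measure_pmf.prob p {1..}"
  define lp where "lp = ln \<pi>"
  have \<pi>0: "0 < \<pi>" using pi_pos[OF mu_pos] by (simp add: \<pi>_def)
  have lp0: "lp \<le> 0" using pi_le1 \<pi>0 by (simp add: lp_def \<pi>_def)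
  define q where "q n = \<pi> ^ L n" for n
  define D where "D n = {\<omega>\<in>space M. (\<Sum>i\<in>{1..A n}. indicator (Ev i (k n) (L n)) \<omega> :: real) < real (A n) * q n / 2}" for n
  have Ds: "D n \<in> sets M" for n unfolding D_def by measurable
  have qexp: "q n = exp (real (L n) * lp)" for n
    using exp_of_nat_mult[of "L n" lp] \<pi>0 by (simp add: lp_def q_def)
  have bnd: "measure M (D n) \<le> 4 / (real (A n) * q n)" if n: "n \<ge> 1" for n
  proof -
    have pos: "real (card {1..A n}) * \<pi> ^ L n > 0" using A_pos[OF n] \<pi>0 by simp
    show ?thesis using lower_prob[OF _ pos[unfolded \<pi>_def], of "k n"] by (simp add: D_def q_def \<pi>_def)
  qed
  define K2 where "K2 = (T * (- lp) + 1) / (a - \<epsilon>/2)"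
  define K3 where "K3 = 2 * (T * (- lp) + 1) / \<epsilon>"
  have e2: "0 < \<epsilon> / 2" "0 < a - \<epsilon>/2" using e by auto
  have ev: "eventually (\<lambda>n. measure M (D n) \<le> 4 * exp (- real n) \<and> exp ((a-\<epsilon>) * c n) \<le> real (A n) * q n / 2) sequentially"
    using eventually_ge_at_top[of 1] A_low[of "\<epsilon>/2", OF e2(1)] c_K[of K2] c_K[of K3]
  proof eventually_elim
    case (elim n)
    have A1: "0 < real (A n)" using A_pos[of n] elim by simp
    have eq: "real (A n) * q n = exp (ln (real (A n)) + real (L n) * lp)"
      using A1 by (simp add: exp_add qexp)
    have l2: "real (L n) \<le> real n * T" by (rule L_le)
    have l3: "real n * T * lp \<le> real (L n) * lp" using l2 lp0 by (rule mult_right_mono_neg)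
    have l4: "(a - \<epsilon>/2) * (K2 * real n) \<le> (a - \<epsilon>/2) * c n" using elim e2 by (intro mult_left_mono) auto
    have l5: "(a - \<epsilon>/2) * (K2 * real n) = real n * T * (- lp) + real n"
      using e2 by (simp add: K2_def field_simps)
    have l6: "\<epsilon> / 2 * (K3 * real n) \<le> \<epsilon> / 2 * c n" using elim e by (intro mult_left_mono) auto
    have l7: "\<epsilon> / 2 * (K3 * real n) = real n * T * (- lp) + real n"
      using e by (simp add: K3_def field_simps)
    have x1: "real n \<le> ln (real (A n)) + real (L n) * lp"
      using l3 l4 l5 elim by (simp add: algebra_simps)
    have "ln 2 \<le> (1::real)" using ln_le_minus_one[of 2] by simp
    then have x2: "(a-\<epsilon>) * c n \<le> ln (real (A n)) + real (L n) * lp - ln 2"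
      using l3 l6 l7 elim by (simp add: algebra_simps)
    have "measure M (D n) \<le> 4 / (real (A n) * q n)" using bnd elim by simp
    also have "\<dots> = 4 * exp (- (ln (real (A n)) + real (L n) * lp))" unfolding eq
      by (rule aux4)
    also have "\<dots> \<le> 4 * exp (- real n)" using x1 by simp
    finally have "measure M (D n) \<le> 4 * exp (- real n)" .
    moreover have "exp ((a-\<epsilon>) * c n) \<le> real (A n) * q n / 2"
    proof -
      have "exp ((a-\<epsilon>) * c n) \<le> exp (ln (real (A n)) + real (L n) * lp - ln 2)" using x2 by simp
      also have "\<dots> = real (A n) * q n / 2" unfolding eq[symmetric] exp_diff using A1 by simp
      finally show ?thesis .
    qed
    ultimately show ?case by simp
  qed
  have sum: "summable (\<lambda>n. measure M (D n))"
    by (rule summable_exp_bound[of _ 4]) (use ev in \<open>auto elim: eventually_mono\<close>)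
  have "AE \<omega> in M. eventually (\<lambda>n. \<omega> \<in> space M - D n) sequentially"
    by (rule borel_cantelli_AE1[OF Ds _ sum]) (simp add: less_top[symmetric])
  then show ?thesis
  proof (rule AE_mp[OF _ AE_I2], intro impI)
    fix \<omega> assume h: "eventually (\<lambda>n. \<omega> \<in> space M - D n) sequentially" "\<omega> \<in> space M"
    from h(1) ev show "eventually (\<lambda>n. \<forall>m\<le>L n. exp ((a-\<epsilon>) * c n) \<le> real (S n m \<omega>)) sequentially"
    proof eventually_elim
      case (elim n)
      show ?case
      proof (intro allI impI)
        fix m assume m: "m \<le> L n"
        have "exp ((a-\<epsilon>) * c n) \<le> real (A n) * q n / 2" using elim by simp
        also have "\<dots> \<le> (\<Sum>i\<in>{1..A n}. indicator (Ev i (k n) (L n)) \<omega> :: real)"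
          using elim by (simp add: D_def not_less)
        also have "\<dots> \<le> real (S n m \<omega>)" unfolding S_def by (rule Ev_le_S) (use m in auto)
        finally show "exp ((a-\<epsilon>) * c n) \<le> real (S n m \<omega>)" .
      qed
    qed
  qed
qed

end


context gwm begin

lemma main:
  "AE \<omega> in M. (\<lambda>n. SUP t\<in>{0..T}. \<bar>logplus (real (S n (nat \<lfloor>real n * t\<rfloor>) \<omega>)) / c n - a\<bar>) \<longlonglongrightarrow> 0"
proof -
  define \<epsilon> where "\<epsilon> j = a / (real j + 2)" for j :: nat
  have \<epsilon>: "0 < \<epsilon> j" "\<epsilon> j < a" for j
  proof -
    have "0 \<le> a * real j" using a_pos by simp
    moreover have "a * (real j + 2) = a * real j + 2 * a" by (simp add: algebra_simps)
    ultimately have "a < a * (real j + 2)" using a_pos by linarith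
    then show "\<epsilon> j < a" by (simp add: \<epsilon>_def divide_less_eq add_pos_nonneg)
    show "0 < \<epsilon> j" using a_pos by (simp add: \<epsilon>_def add_pos_nonneg)
  qed
  have "AE \<omega> in M. \<forall>j. eventually (\<lambda>n. \<forall>m\<le>L n. exp ((a-\<epsilon> j) * c n) \<le> real (S n m \<omega>)
          \<and> real (S n m \<omega>) \<le> exp ((a+\<epsilon> j) * c n)) sequentially"
  proof (subst AE_all_countable, intro allI)
    fix j
    show "AE \<omega> in M. eventually (\<lambda>n. \<forall>m\<le>L n. exp ((a-\<epsilon> j) * c n) \<le> real (S n m \<omega>)
          \<and> real (S n m \<omega>) \<le> exp ((a+\<epsilon> j) * c n)) sequentially"
      using upper_AE[OF \<epsilon>(1)[of j]] lower_AE[OF \<epsilon>(1)[of j] \<epsilon>(2)[of j]]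
    proof eventually_elim
      case (elim \<omega>)
      from elim(1) elim(2) show ?case by eventually_elim auto
    qed
  qed
  then show ?thesis
  proof (rule AE_mp[OF _ AE_I2], intro impI)
    fix \<omega> assume H: "\<forall>j. eventually (\<lambda>n. \<forall>m\<le>L n. exp ((a-\<epsilon> j) * c n) \<le> real (S n m \<omega>)
          \<and> real (S n m \<omega>) \<le> exp ((a+\<epsilon> j) * c n)) sequentially" and "\<omega> \<in> space M"
    define g where "g n m = \<bar>logplus (real (S n m \<omega>)) / c n - a\<bar>" for n m
    define V where "V n t = g n (nat \<lfloor>real n * t\<rfloor>)" for n t
    have bdd: "bdd_above (V n ` {0..T})" for n
    proof -
      have "V n ` {0..T} \<subseteq> g n ` {..L n}" using L_ge by (auto simp: V_def)
      moreover have "bdd_above (g n ` {..L n})" by (intro bdd_above_finite) simp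
      ultimately show ?thesis by (metis bdd_above_mono)
    qed
    have ne: "{0..T} \<noteq> {}" using T_pos by simp
    show "(\<lambda>n. SUP t\<in>{0..T}. \<bar>logplus (real (S n (nat \<lfloor>real n * t\<rfloor>) \<omega>)) / c n - a\<bar>) \<longlonglongrightarrow> 0"
      unfolding g_def[symmetric] V_def[symmetric]
    proof (rule order_tendstoI)
      fix y :: real assume y: "y < 0"
      show "eventually (\<lambda>n. y < (SUP t\<in>{0..T}. V n t)) sequentially"
      proof (rule always_eventually, intro allI)
        fix n
        have "0 \<le> V n 0" by (simp add: V_def g_def)
        also have "\<dots> \<le> (SUP t\<in>{0..T}. V n t)" using T_pos by (intro cSUP_upper bdd) auto
        finally show "y < (SUP t\<in>{0..T}. V n t)" using y by simp
      qed
    next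
      fix e :: real assume e: "0 < e"
      obtain j :: nat where j: "a / e < real j" using reals_Archimedean2 by blast
      have ej: "\<epsilon> j < e"
      proof -
        have "a < e * real j" using j e by (simp add: pos_divide_less_eq mult.commute)
        also have "\<dots> < e * (real j + 2)" using e by simp
        finally show ?thesis using e by (simp add: \<epsilon>_def pos_divide_less_eq mult.commute)
      qed
      from H[rule_format, of j] eventually_ge_at_top[of 1]
      show "eventually (\<lambda>n. (SUP t\<in>{0..T}. V n t) < e) sequentially"
      proof eventually_elim
        case (elim n)
        have "(SUP t\<in>{0..T}. V n t) \<le> \<epsilon> j"
        proof (rule cSUP_least[OF ne])
          fix t assume t: "t \<in> {0..T}"
          have m: "nat \<lfloor>real n * t\<rfloor> \<le> L n" using t by (intro L_ge) auto
          have cn: "0 < c n" using c_pos elim(2) by simp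
          have b: "exp ((a-\<epsilon> j) * c n) \<le> real (S n (nat \<lfloor>real n * t\<rfloor>) \<omega>)"
                  "real (S n (nat \<lfloor>real n * t\<rfloor>) \<omega>) \<le> exp ((a+\<epsilon> j) * c n)"
            using elim(1) m by blast+
          show "V n t \<le> \<epsilon> j" unfolding V_def g_def
            by (rule value_bound[OF cn \<epsilon>(1) \<epsilon>(2) b(1) b(2)])
        qed
        then show ?case using ej by simp
      qed
    qed
  qed
qed

end

theorem lemma4:
  fixes M :: "'a measure"
    and p :: "nat pmf" and \<mu> :: real
    and \<xi> :: "nat \<Rightarrow> nat \<Rightarrow> nat \<Rightarrow> nat \<Rightarrow> 'a \<Rightarrow> nat"
    and X :: "nat \<Rightarrow> nat \<Rightarrow> nat \<Rightarrow> 'a \<Rightarrow> nat"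
    and c :: "nat \<Rightarrow> real" and A :: "nat \<Rightarrow> nat" and a :: real
    and T :: real and k :: "nat \<Rightarrow> nat"
  assumes "prob_space M"
    and indep: "prob_space.indep_vars M (\<lambda>_. count_space UNIV)
                  (\<lambda>(i, k, n, j). \<xi> i k n j) (UNIV :: (nat \<times> nat \<times> nat \<times> nat) set)"
    and distr: "\<And>i k n j. distr M (count_space UNIV) (\<xi> i k n j) = measure_pmf p"
    and mean_int: "integrable (measure_pmf p) real"
    and mean: "measure_pmf.expectation p real = \<mu>"
    and mu_pos: "0 < \<mu>"
    and X_def: "X = gw \<xi>"
    and c_pos: "\<And>n. n \<ge> 1 \<Longrightarrow> c n > 0"
    and c_lim: "filterlim (\<lambda>n. c n / real n) at_top sequentially"
    and A_pos: "\<And>n. n \<ge> 1 \<Longrightarrow> A n \<ge> 1"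
    and A_lim: "(\<lambda>n. ln (real (A n)) / c n) \<longlonglongrightarrow> a"
    and a_pos: "a > 0"
    and T_pos: "T > 0"
  shows "AE \<omega> in M. (\<lambda>n. SUP t\<in>{0..T}.
            \<bar>logplus (real (\<Sum>i=1..A n. X i (k n) (nat \<lfloor>real n * t\<rfloor>) \<omega>)) / c n - a\<bar>)
          \<longlonglongrightarrow> 0"
proof -
  interpret gwm M p \<mu> \<xi> c A a T k
    apply (intro gwm.intro gwl.intro gwl_axioms.intro gwm_axioms.intro)
    apply (fact \<open>prob_space M\<close>)
    apply (fact indep)
    apply (fact distr)
    apply (fact mean_int)
    apply (fact mean)
    apply (fact mu_pos)
    apply (fact c_pos)
    apply (fact c_lim)
    apply (fact A_pos)
    apply (fact A_lim)
    apply (fact a_pos)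
    apply (fact T_pos)
    done
  have eq: "(\<Sum>i=1..A n. X i (k n) m \<omega>) = S n m \<omega>" for n m \<omega>
    by (simp add: S_def X_def)
  show ?thesis unfolding eq by (rule main)
qed


end
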